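(* Let $f=a_dx^d+\dots+a_0\in\mathbb Z[x]$ be the associated polynomial of a cyclic expansive automorphism of a compact connected abelian group, assumed irreducible, and let $\beta$ be a root of $f$. Then $f$ is monic up to a sign (i.e. $a_d=\pm1$) if and only if all unstable prime divisors of $\mathbb Q(\beta)$ are archimedean.
   Context: The associated polynomial is primitive with $a_0\ne0$, $a_d>0$, and hyperbolic. A prime divisor (place) $P$ of $\mathbb Q(\beta)$ is unstable if $\beta^n\to0$ as $n\to-\infty$ in the $P$-topology. *)

theory Defs
  imports "HOL-Computational_Algebra.Computational_Algebra"
begin

definition rat_field_gen :: "complex \<Rightarrow> complex set" where
  "rat_field_gen \<beta> =
     {poly (map_poly of_rat p) \<beta> / poly (map_poly of_rat q) \<beta> | p q :: rat poly.
        poly (map_poly of_rat q) \<beta> \<noteq> 0}"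

text \<open>A (nontrivial) absolute value on a subfield K of the complex numbers.
  Places (prime divisors) are equivalence classes of these.\<close>
definition abs_value_on :: "complex set \<Rightarrow> (complex \<Rightarrow> real) \<Rightarrow> bool" where
  "abs_value_on K v \<longleftrightarrow>
     (\<forall>x\<in>K. v x \<ge> 0 \<and> (v x = 0 \<longleftrightarrow> x = 0)) \<and>
     (\<forall>x\<in>K. \<forall>y\<in>K. v (x * y) = v x * v y) \<and>
     (\<forall>x\<in>K. \<forall>y\<in>K. v (x + y) \<le> v x + v y) \<and>
     (\<exists>x\<in>K. x \<noteq> 0 \<and> v x \<noteq> 1)"

definition archimedean_on :: "complex set \<Rightarrow> (complex \<Rightarrow> real) \<Rightarrow> bool" where
  "archimedean_on K v \<longleftrightarrow> \<not> (\<forall>x\<in>K. \<forall>y\<in>K. v (x + y) \<le> max (v x) (v y))"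

text \<open>Unstable place: beta^n \<rightarrow> 0 as n \<rightarrow> -\<infinity> in the v-topology,
  i.e. v(beta^(-n)) \<rightarrow> 0 as n \<rightarrow> +\<infinity>.\<close>
definition unstable_at :: "complex \<Rightarrow> (complex \<Rightarrow> real) \<Rightarrow> bool" where
  "unstable_at \<beta> v \<longleftrightarrow> (\<lambda>n::nat. v (inverse \<beta> ^ n)) \<longlonglongrightarrow> 0"

definition hyperbolic_poly :: "int poly \<Rightarrow> bool" where
  "hyperbolic_poly f \<longleftrightarrow> (\<forall>z::complex. poly (map_poly of_int f) z = 0 \<longrightarrow> cmod z \<noteq> 1)"

end

theory Submission imports Defs "HOL-Computational_Algebra.Field_as_Ring" begin


lemma mpi_add: "map_poly (of_int::int\<Rightarrow>'a::comm_ring_1) (p + q) = map_poly of_int p + map_poly of_int q"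
  by (rule poly_eqI) (simp add: coeff_map_poly)
lemma mpi_diff: "map_poly (of_int::int\<Rightarrow>'a::comm_ring_1) (p - q) = map_poly of_int p - map_poly of_int q"
  by (rule poly_eqI) (simp add: coeff_map_poly)
lemma mpi_mult: "map_poly (of_int::int\<Rightarrow>'a::comm_ring_1) (p * q) = map_poly of_int p * map_poly of_int q"
  by (rule poly_eqI) (simp add: coeff_map_poly coeff_mult of_int_sum)
lemma mpi_smult: "map_poly (of_int::int\<Rightarrow>'a::comm_ring_1) (smult c q) = smult (of_int c) (map_poly of_int q)"
  by (rule poly_eqI) (simp add: coeff_map_poly)
lemma mpr_add: "map_poly (of_rat::rat\<Rightarrow>'a::field_char_0) (p + q) = map_poly of_rat p + map_poly of_rat q"
  by (rule poly_eqI) (simp add: coeff_map_poly of_rat_add)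
lemma mpr_diff: "map_poly (of_rat::rat\<Rightarrow>'a::field_char_0) (p - q) = map_poly of_rat p - map_poly of_rat q"
  by (rule poly_eqI) (simp add: coeff_map_poly of_rat_diff)
lemma mpr_mult: "map_poly (of_rat::rat\<Rightarrow>'a::field_char_0) (p * q) = map_poly of_rat p * map_poly of_rat q"
  by (rule poly_eqI) (simp add: coeff_map_poly coeff_mult of_rat_sum of_rat_mult)

lemma ipoly_altdef: "poly (map_poly (of_int::int\<Rightarrow>complex) P) x = (\<Sum>i\<le>degree P. of_int (coeff P i) * x^i)"
proof -
  have "degree (map_poly (of_int::int\<Rightarrow>complex) P) = degree P"
    by (rule degree_map_poly) simp
  then show ?thesis by (simp add: poly_altdef coeff_map_poly)
qed

lemma K_iff: "x \<in> rat_field_gen b \<longleftrightarrow> (\<exists>p q. poly (map_poly of_rat q) b \<noteq> 0 \<and>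
   x = poly (map_poly of_rat p) b / poly (map_poly of_rat q) b)"
  unfolding rat_field_gen_def by blast

lemma K_rat: "of_rat c \<in> rat_field_gen b"
  unfolding K_iff by (rule exI[of _ "[:c:]"], rule exI[of _ 1]) (simp add: map_poly_pCons)

lemma K_int: "of_int n \<in> rat_field_gen b"
  using K_rat[of "of_int n" b] by simp

lemma K_nat: "of_nat n \<in> rat_field_gen b"
  using K_int[of "int n" b] by simp

lemma K_one: "1 \<in> rat_field_gen b" using K_int[of 1 b] by simp
lemma K_zero: "0 \<in> rat_field_gen b" using K_int[of 0 b] by simp

lemma K_gen: "b \<in> rat_field_gen b"
  unfolding K_iff by (rule exI[of _ "[:0,1:]"], rule exI[of _ 1]) (simp add: map_poly_pCons)

lemma K_add: assumes "x \<in> rat_field_gen b" "y \<in> rat_field_gen b" shows "x + y \<in> rat_field_gen b"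
proof -
  obtain p q where pq: "poly (map_poly of_rat q) b \<noteq> 0" "x = poly (map_poly of_rat p) b / poly (map_poly of_rat q) b"
    using assms(1) unfolding K_iff by blast
  obtain p' q' where pq': "poly (map_poly of_rat q') b \<noteq> 0" "y = poly (map_poly of_rat p') b / poly (map_poly of_rat q') b"
    using assms(2) unfolding K_iff by blast
  show ?thesis unfolding K_iff
    apply (rule exI[of _ "p*q' + p'*q"], rule exI[of _ "q*q'"])
    using pq pq' by (simp add: mpr_add mpr_mult add_frac_eq)
qed

lemma K_mult: assumes "x \<in> rat_field_gen b" "y \<in> rat_field_gen b" shows "x * y \<in> rat_field_gen b"
proof -
  obtain p q where pq: "poly (map_poly of_rat q) b \<noteq> 0" "x = poly (map_poly of_rat p) b / poly (map_poly of_rat q) b"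
    using assms(1) unfolding K_iff by blast
  obtain p' q' where pq': "poly (map_poly of_rat q') b \<noteq> 0" "y = poly (map_poly of_rat p') b / poly (map_poly of_rat q') b"
    using assms(2) unfolding K_iff by blast
  show ?thesis unfolding K_iff
    apply (rule exI[of _ "p*p'"], rule exI[of _ "q*q'"])
    using pq(1) pq'(1) unfolding pq(2) pq'(2) by (simp add: mpr_mult)
qed

lemma K_inverse: assumes "x \<in> rat_field_gen b" shows "inverse x \<in> rat_field_gen b"
proof (cases "x = 0")
  case True then show ?thesis using K_zero by simp
next
  case False
  obtain p q where pq: "poly (map_poly of_rat q) b \<noteq> 0" "x = poly (map_poly of_rat p) b / poly (map_poly of_rat q) b"
    using assms(1) unfolding K_iff by blast
  show ?thesis unfolding K_iff
    apply (rule exI[of _ "q"], rule exI[of _ "p"])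
    using pq(1) False unfolding pq(2) by simp
qed

lemma K_uminus: assumes "x \<in> rat_field_gen b" shows "- x \<in> rat_field_gen b"
  using K_mult[OF K_int[of "-1"] assms] by simp

lemma K_diff: assumes "x \<in> rat_field_gen b" "y \<in> rat_field_gen b" shows "x - y \<in> rat_field_gen b"
  using K_add[OF assms(1) K_uminus[OF assms(2)]] by simp

lemma K_divide: assumes "x \<in> rat_field_gen b" "y \<in> rat_field_gen b" shows "x / y \<in> rat_field_gen b"
  using K_mult[OF assms(1) K_inverse[OF assms(2)]] by (simp add: divide_inverse)

lemma K_power: assumes "x \<in> rat_field_gen b" shows "x ^ n \<in> rat_field_gen b"
  by (induction n) (auto intro: K_mult K_one assms)

lemma K_sum: assumes "\<And>i. i \<in> A \<Longrightarrow> g i \<in> rat_field_gen b" shows "sum g A \<in> rat_field_gen b"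
  using assms by (induction A rule: infinite_finite_induct) (auto intro: K_add K_zero)


lemma forward_dir:
  fixes f :: "int poly" and \<beta> :: complex and v :: "complex \<Rightarrow> real"
  assumes root: "poly (map_poly of_int f) \<beta> = 0" and a0: "coeff f 0 \<noteq> 0"
    and lc: "lead_coeff f = 1 \<or> lead_coeff f = -1"
    and av: "abs_value_on (rat_field_gen \<beta>) v" and un: "unstable_at \<beta> v"
    and ultra: "\<forall>x\<in>rat_field_gen \<beta>. \<forall>y\<in>rat_field_gen \<beta>. v (x + y) \<le> max (v x) (v y)"
  shows False
proof -
  define K where "K = rat_field_gen \<beta>"
  have ultra': "\<And>x y. x \<in> K \<Longrightarrow> y \<in> K \<Longrightarrow> v (x + y) \<le> max (v x) (v y)"
    using ultra K_def by blast
  have mult: "\<And>x y. x \<in> K \<Longrightarrow> y \<in> K \<Longrightarrow> v (x * y) = v x * v y"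
    using av unfolding abs_value_on_def K_def by blast
  have nonneg: "\<And>x. x \<in> K \<Longrightarrow> v x \<ge> 0" and zero: "\<And>x. x \<in> K \<Longrightarrow> v x = 0 \<longleftrightarrow> x = 0"
    using av unfolding abs_value_on_def K_def by blast+
  have b0: "\<beta> \<noteq> 0"
  proof
    assume "\<beta> = 0"
    with root have "poly (map_poly (of_int::int\<Rightarrow>complex) f) 0 = 0" by simp
    then show False using a0 by (simp add: poly_0_coeff_0 coeff_map_poly)
  qed
  have K1: "1 \<in> K" and Km1: "-1 \<in> K" and Kb: "\<beta> \<in> K" and Kg: "inverse \<beta> \<in> K"
    using K_one K_int[of "-1"] K_gen K_inverse[OF K_gen] K_def by auto
  have v1: "v 1 = 1"
  proof -
    have "v 1 = v 1 * v 1" using mult[OF K1 K1] by simp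
    moreover have "v 1 \<noteq> 0" using zero[OF K1] by simp
    ultimately show ?thesis by (metis mult_cancel_left1)
  qed
  have vm1: "v (-1) = 1"
  proof -
    have "v (-1) * v (-1) = 1" using mult[OF Km1 Km1] v1 by simp
    then have "(v (-1) - 1) * (v (-1) + 1) = 0" by (simp add: algebra_simps)
    moreover have "v (-1) \<ge> 0" using nonneg[OF Km1] .
    ultimately show ?thesis by auto
  qed
  have vnat: "v (of_nat n) \<le> 1" for n
  proof (induction n)
    case 0 then show ?case using zero[OF K_zero[of \<beta>, folded K_def]] by simp
  next
    case (Suc n)
    have "v (of_nat (Suc n)) = v (of_nat n + 1)" by (simp add: add.commute)
    also have "\<dots> \<le> max (v (of_nat n)) (v 1)"
      using ultra'[of "of_nat n" 1] K1 K_int[of "int n" \<beta>] K_def by simp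
    finally show ?case using Suc v1 by simp
  qed
  have vint: "v (of_int n) \<le> 1" for n
  proof (cases "n \<ge> 0")
    case True then show ?thesis using vnat[of "nat n"] by simp
  next
    case False
    then have "(of_int n :: complex) = (-1) * of_nat (nat (-n))" by simp
    then have "v (of_int n) = v (-1) * v (of_nat (nat (-n)))"
      using mult[OF Km1, of "of_nat (nat (-n))"] K_nat[of "nat (-n)" \<beta>] K_def by simp
    then show ?thesis using vm1 vnat by simp
  qed
  have vpow: "x \<in> K \<Longrightarrow> v (x ^ n) = v x ^ n" for x n
    by (induction n) (auto simp: v1 mult K_power K_def)
  have vg: "v (inverse \<beta>) < 1"
  proof (rule ccontr)
    assume "\<not> v (inverse \<beta>) < 1"
    then have ge: "v (inverse \<beta>) ^ n \<ge> 1" for n by (simp add: one_le_power)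
    have "(\<lambda>n. v (inverse \<beta> ^ n)) \<longlonglongrightarrow> 0" using un unfolding unstable_at_def .
    then have "(\<lambda>n. v (inverse \<beta>) ^ n) \<longlonglongrightarrow> 0" using vpow[OF Kg] by simp
    then have "1 \<le> (0::real)" by (rule LIMSEQ_le_const) (use ge in auto)
    then show False by simp
  qed
  have vb: "v \<beta> > 1"
  proof -
    have "v \<beta> * v (inverse \<beta>) = 1" using mult[OF Kb Kg] b0 v1 by simp
    moreover have "v (inverse \<beta>) \<ge> 0" using nonneg[OF Kg] .
    moreover have "\<not> v \<beta> \<le> 1"
    proof
      assume "v \<beta> \<le> 1"
      then have "v \<beta> * v (inverse \<beta>) \<le> 1 * v (inverse \<beta>)"
        using nonneg[OF Kg] by (intro mult_right_mono) auto
      then show False using vg \<open>v \<beta> * v (inverse \<beta>) = 1\<close> by simp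
    qed
    ultimately show ?thesis by simp
  qed
  have Kpb: "\<beta> ^ n \<in> K" for n using K_power K_gen K_def by auto
  define a where "a = (\<lambda>i. (of_int (coeff f i) :: complex))"
  have Ka: "a i \<in> K" for i using K_int K_def a_def by simp
  have va: "v (a i) \<le> 1" for i using vint a_def by simp
  have bound: "v (\<Sum>i<Suc n. a i * \<beta> ^ i) \<le> v \<beta> ^ n" for n
  proof (induction n)
    case 0 then show ?case using va[of 0] by simp
  next
    case (Suc n)
    have KS: "(\<Sum>i<Suc n. a i * \<beta> ^ i) \<in> K"
      using K_sum[of "{..<Suc n}" "\<lambda>i. a i * \<beta> ^ i" \<beta>] Ka Kb K_mult K_power K_def by auto
    have Kt: "a (Suc n) * \<beta> ^ Suc n \<in> K" using Ka Kb K_mult K_power K_def by auto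
    have "v (\<Sum>i<Suc (Suc n). a i * \<beta> ^ i) = v ((\<Sum>i<Suc n. a i * \<beta> ^ i) + a (Suc n) * \<beta> ^ Suc n)"
      by simp
    also have "\<dots> \<le> max (v (\<Sum>i<Suc n. a i * \<beta> ^ i)) (v (a (Suc n) * \<beta> ^ Suc n))"
      using ultra'[OF KS Kt] .
    also have "\<dots> \<le> v \<beta> ^ Suc n"
    proof (rule max.boundedI)
      show "v (\<Sum>i<Suc n. a i * \<beta> ^ i) \<le> v \<beta> ^ Suc n"
      proof -
        have "v \<beta> ^ n \<le> v \<beta> ^ Suc n" using vb by (intro power_increasing) auto
        then show ?thesis using Suc by linarith
      qed
      have "v (a (Suc n) * \<beta> ^ Suc n) = v (a (Suc n)) * v \<beta> ^ Suc n"
        using mult[OF Ka Kpb] vpow[OF Kb] K_def by (simp del: power_Suc)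
      also have "\<dots> \<le> 1 * v \<beta> ^ Suc n"
        using va[of "Suc n"] vb by (intro mult_right_mono) auto
      finally show "v (a (Suc n) * \<beta> ^ Suc n) \<le> v \<beta> ^ Suc n" by simp
    qed
    finally show ?case .
  qed
  define d where "d = degree f"
  have d0: "d \<noteq> 0"
  proof
    assume "d = 0"
    then have "poly (map_poly (of_int::int\<Rightarrow>complex) f) \<beta> = of_int (coeff f 0)"
      by (simp add: ipoly_altdef d_def)
    then show False using root a0 by simp
  qed
  then obtain d' where d': "d = Suc d'" by (cases d) auto
  have "0 = (\<Sum>i\<le>d. a i * \<beta> ^ i)" using root by (simp add: ipoly_altdef a_def d_def)
  also have "\<dots> = (\<Sum>i<Suc d'. a i * \<beta> ^ i) + a d * \<beta> ^ d"
    by (simp add: d' lessThan_Suc_atMost[symmetric])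
  finally have eq: "a d * \<beta> ^ d = - (\<Sum>i<Suc d'. a i * \<beta> ^ i)" by (simp add: add_eq_0_iff)
  have KS: "(\<Sum>i<Suc d'. a i * \<beta> ^ i) \<in> K"
    using K_sum[of "{..<Suc d'}" "\<lambda>i. a i * \<beta> ^ i" \<beta>] Ka Kb K_mult K_power K_def by auto
  have vad: "v (a d) = 1" using lc vm1 v1 by (auto simp: a_def d_def)
  have "v (a d * \<beta> ^ d) = v \<beta> ^ d"
    using mult[OF Ka Kpb] vpow[OF Kb] vad K_def by simp
  moreover have "v (- (\<Sum>i<Suc d'. a i * \<beta> ^ i)) = v (\<Sum>i<Suc d'. a i * \<beta> ^ i)"
    using mult[OF Km1 KS] vm1 by simp
  ultimately have "v \<beta> ^ d \<le> v \<beta> ^ d'" using eq bound[of d'] by simp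
  moreover have "v \<beta> ^ d' < v \<beta> ^ d" using vb d' by (simp add: power_strict_increasing_iff)
  ultimately show False by simp
qed



lemma mpi_reflect: "map_poly (of_int::int\<Rightarrow>'a::{comm_ring_1,ring_char_0}) (reflect_poly Q) = reflect_poly (map_poly of_int Q)"
proof -
  have d: "degree (map_poly (of_int::int\<Rightarrow>'a) Q) = degree Q" by (rule degree_map_poly) simp
  show ?thesis by (rule poly_eqI) (simp add: coeff_map_poly coeff_reflect_poly d)
qed

lemma lead_coeff_reflect: "coeff Q 0 \<noteq> 0 \<Longrightarrow> lead_coeff (reflect_poly Q) = coeff Q 0"
  by (simp add: coeff_reflect_poly)

context
  fixes f :: "int poly" and \<beta> :: complex
  assumes root: "poly (map_poly of_int f) \<beta> = 0" and a0: "coeff f 0 \<noteq> 0"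
    and irr: "irreducible f"
begin

lemma f_deg: "degree f \<noteq> 0"
proof
  assume "degree f = 0"
  then have "poly (map_poly (of_int::int\<Rightarrow>complex) f) \<beta> = of_int (coeff f 0)"
    by (simp add: ipoly_altdef)
  then show False using root a0 by simp
qed

lemma f_nz: "f \<noteq> 0" using f_deg by auto

lemma ZK: assumes "poly (map_poly of_int Q) \<beta> = 0" shows "f dvd Q"
proof -
  define Z where "Z = (\<lambda>Q::int poly. Q \<noteq> 0 \<and> poly (map_poly of_int Q) \<beta> = 0)"
  have "Z f" using f_nz root Z_def by simp
  then obtain m where m: "Z m" and mmin: "\<And>Q. Z Q \<Longrightarrow> degree m \<le> degree Q"
    using ex_has_least_nat[of Z f degree] by blast
  have div: "\<exists>a q. a \<noteq> 0 \<and> smult a Q = m * q" if Q: "poly (map_poly of_int Q) \<beta> = 0" for Q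
  proof -
    define r where "r = pseudo_mod Q m"
    have mnz: "m \<noteq> 0" using m Z_def by simp
    obtain a q where aq: "a \<noteq> 0" "smult a Q = m * q + r"
      using pseudo_mod(1)[OF mnz, of Q] r_def by blast
    have rd: "r = 0 \<or> degree r < degree m" using pseudo_mod(2)[OF mnz, of Q] r_def by simp
    have "map_poly (of_int::int\<Rightarrow>complex) (smult a Q) = map_poly of_int (m * q + r)" using aq by simp
    then have "poly (map_poly (of_int::int\<Rightarrow>complex) (smult a Q)) \<beta> = poly (map_poly of_int (m * q + r)) \<beta>"
      by simp
    then have "poly (map_poly (of_int::int\<Rightarrow>complex) r) \<beta> = 0"
      using Q m unfolding Z_def by (simp add: mpi_smult mpi_add mpi_mult)
    then have "r = 0" using rd mmin[of r] Z_def by force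
    then show ?thesis using aq by auto
  qed
  have pr: "prime_elem f" using irr by (rule irreducible_imp_prime_poly)
  obtain a q where aq: "a \<noteq> 0" "smult a f = m * q" using div[OF root] by blast
  have "f dvd m * q" using aq(2)[symmetric] by (metis dvd_triv_right mult_smult_left mult_1 smult_one) 
  then have "f dvd m \<or> f dvd q" using pr by (simp add: prime_elem_dvd_mult_iff)
  moreover have "\<not> f dvd q"
  proof
    assume "f dvd q"
    then obtain h where h: "q = f * h" by (elim dvdE)
    have "[:a:] * f = (m * h) * f" using aq(2) h by (simp add: algebra_simps)
    then have e: "[:a:] = m * h" by (simp only: mult_right_cancel[OF f_nz])
    then have "h \<noteq> 0" using aq(1) by auto
    then have "degree m = 0" using e m Z_def by (metis add_is_0 degree_mult_eq degree_pCons_0 mult_eq_0_iff)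
    then obtain c where "m = [:c:]" by (metis degree_eq_zeroE)
    then show False using m Z_def by (auto simp: map_poly_pCons)
  qed
  ultimately have "f dvd m" by simp
  obtain a' q' where aq': "a' \<noteq> 0" "smult a' Q = m * q'" using div[OF assms] by blast
  have "f dvd [:a':] * Q" using aq'(2) \<open>f dvd m\<close> by (metis dvd_mult2 mult_smult_left mult_1 smult_one)
  then have "f dvd [:a':] \<or> f dvd Q" using pr by (meson prime_elem_dvd_multD)
  moreover have "\<not> f dvd [:a':]"
  proof
    assume "f dvd [:a':]"
    then have "degree f \<le> degree [:a':]" using aq'(1) by (intro dvd_imp_degree_le) auto
    then show False using f_deg by simp
  qed
  ultimately show ?thesis by simp
qed

end


definition ring_in :: "complex \<Rightarrow> complex \<Rightarrow> complex set \<Rightarrow> bool" where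
  "ring_in b g R \<longleftrightarrow> R \<subseteq> rat_field_gen b \<and> 1 \<in> R \<and> g \<in> R \<and>
     (\<forall>x\<in>R. \<forall>y\<in>R. x + y \<in> R \<and> x * y \<in> R) \<and> (\<forall>x\<in>R. - x \<in> R)"

definition good :: "complex \<Rightarrow> complex \<Rightarrow> complex set \<Rightarrow> bool" where
  "good P g R \<longleftrightarrow> (\<forall>b1\<in>R. \<forall>b2\<in>R. b1 * P + b2 * g \<noteq> 1)"

definition idl :: "complex \<Rightarrow> complex \<Rightarrow> complex set \<Rightarrow> complex set" where
  "idl P g R = {b1 * P + b2 * g | b1 b2. b1 \<in> R \<and> b2 \<in> R}"

definition adj :: "complex set \<Rightarrow> complex \<Rightarrow> complex set" where
  "adj R y = {poly A y | A. \<forall>i. coeff A i \<in> R}"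

context
  fixes b g :: complex and R :: "complex set"
  assumes R: "ring_in b g R"
begin

lemma r_K: "x \<in> R \<Longrightarrow> x \<in> rat_field_gen b" using R unfolding ring_in_def by blast
lemma r_1: "1 \<in> R" using R unfolding ring_in_def by blast
lemma r_g: "g \<in> R" using R unfolding ring_in_def by blast
lemma r_add: "x \<in> R \<Longrightarrow> y \<in> R \<Longrightarrow> x + y \<in> R" using R unfolding ring_in_def by blast
lemma r_mult: "x \<in> R \<Longrightarrow> y \<in> R \<Longrightarrow> x * y \<in> R" using R unfolding ring_in_def by blast
lemma r_uminus: "x \<in> R \<Longrightarrow> - x \<in> R" using R unfolding ring_in_def by blast
lemma r_0: "0 \<in> R" using r_add[OF r_1 r_uminus[OF r_1]] by simp
lemma r_diff: "x \<in> R \<Longrightarrow> y \<in> R \<Longrightarrow> x - y \<in> R" using r_add[OF _ r_uminus, of x y] by simp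
lemma r_nat: "of_nat n \<in> R"
  by (induction n) (auto intro: r_0 r_1 r_add)
lemma r_int: "of_int n \<in> R"
proof (cases "n \<ge> 0")
  case True then show ?thesis using r_nat[of "nat n"] by simp
next
  case False then show ?thesis using r_uminus[OF r_nat[of "nat (-n)"]] by simp
qed
lemma r_pow: "x \<in> R \<Longrightarrow> x ^ n \<in> R"
  by (induction n) (auto intro: r_1 r_mult)
lemma r_sum: "(\<And>i. i \<in> A \<Longrightarrow> h i \<in> R) \<Longrightarrow> sum h A \<in> R"
  by (induction A rule: infinite_finite_induct) (auto intro: r_0 r_add)
lemma r_poly: "(\<And>i. coeff A i \<in> R) \<Longrightarrow> y \<in> R \<Longrightarrow> poly A y \<in> R"
  unfolding poly_altdef by (intro r_sum r_mult r_pow) auto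

lemma adj_ring: assumes y: "y \<in> rat_field_gen b"
  shows "ring_in b g (adj R y)" "R \<subseteq> adj R y" "y \<in> adj R y"
proof -
  have sub: "R \<subseteq> adj R y"
  proof
    fix x assume x: "x \<in> R"
    have "\<forall>i. coeff [:x:] i \<in> R" using x r_0 by (auto simp: coeff_pCons split: nat.splits)
    then show "x \<in> adj R y" unfolding adj_def by (intro CollectI exI[of _ "[:x:]"]) auto
  qed
  then show "R \<subseteq> adj R y" .
  have "\<forall>i. coeff [:0, 1:] i \<in> R" using r_0 r_1 by (auto simp: coeff_pCons split: nat.splits)
  then show yin: "y \<in> adj R y" unfolding adj_def by (intro CollectI exI[of _ "[:0,1:]"]) auto
  show "ring_in b g (adj R y)"
    unfolding ring_in_def
  proof (intro conjI ballI)
    show "adj R y \<subseteq> rat_field_gen b"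
    proof
      fix x assume "x \<in> adj R y"
      then obtain A where A: "\<forall>i. coeff A i \<in> R" "x = poly A y" unfolding adj_def by blast
      show "x \<in> rat_field_gen b" unfolding A(2) poly_altdef
        using A(1) r_K y by (intro K_sum K_mult K_power) auto
    qed
    show "1 \<in> adj R y" using sub r_1 by blast
    show "g \<in> adj R y" using sub r_g by blast
  next
    fix x z assume x: "x \<in> adj R y" and z: "z \<in> adj R y"
    obtain A where A: "\<forall>i. coeff A i \<in> R" "x = poly A y" using x unfolding adj_def by blast
    obtain B where B: "\<forall>i. coeff B i \<in> R" "z = poly B y" using z unfolding adj_def by blast
    have "\<forall>i. coeff (A + B) i \<in> R" using A B by (auto intro: r_add)
    then show "x + z \<in> adj R y" unfolding adj_def A B by (intro CollectI exI[of _ "A + B"]) auto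
    have "\<forall>i. coeff (A * B) i \<in> R" using A B unfolding coeff_mult by (auto intro!: r_sum r_mult)
    then show "x * z \<in> adj R y" unfolding adj_def A B by (intro CollectI exI[of _ "A * B"]) auto
  next
    fix x assume x: "x \<in> adj R y"
    obtain A where A: "\<forall>i. coeff A i \<in> R" "x = poly A y" using x unfolding adj_def by blast
    have "\<forall>i. coeff (- A) i \<in> R" using A by (auto intro: r_uminus)
    then show "- x \<in> adj R y" unfolding adj_def A by (intro CollectI exI[of _ "- A"]) auto
  qed
qed

lemma idl_0: "0 \<in> idl P g R" unfolding idl_def using r_0 by force
lemma idl_add: "x \<in> idl P g R \<Longrightarrow> y \<in> idl P g R \<Longrightarrow> x + y \<in> idl P g R"
proof -
  assume "x \<in> idl P g R" "y \<in> idl P g R"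
  then obtain a1 a2 c1 c2 where "a1 \<in> R" "a2 \<in> R" "c1 \<in> R" "c2 \<in> R" "x = a1 * P + a2 * g" "y = c1 * P + c2 * g"
    unfolding idl_def by blast
  then show ?thesis unfolding idl_def
    by (intro CollectI exI[of _ "a1 + c1"] exI[of _ "a2 + c2"]) (auto intro: r_add simp: algebra_simps)
qed
lemma idl_mult: "r \<in> R \<Longrightarrow> x \<in> idl P g R \<Longrightarrow> r * x \<in> idl P g R"
proof -
  assume r: "r \<in> R" "x \<in> idl P g R"
  then obtain a1 a2 where "a1 \<in> R" "a2 \<in> R" "x = a1 * P + a2 * g"
    unfolding idl_def by blast
  then show ?thesis unfolding idl_def using r
    by (intro CollectI exI[of _ "r * a1"] exI[of _ "r * a2"]) (auto intro: r_mult simp: algebra_simps)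
qed
lemma idl_uminus: "x \<in> idl P g R \<Longrightarrow> - x \<in> idl P g R"
  using idl_mult[OF r_uminus[OF r_1]] by fastforce
lemma idl_sub: "P \<in> R \<Longrightarrow> x \<in> idl P g R \<Longrightarrow> x \<in> R"
  unfolding idl_def using r_g by (auto intro!: r_add r_mult)
lemma idl_g: "g \<in> idl P g R"
  unfolding idl_def using r_0 r_1 by (intro CollectI exI[of _ 0] exI[of _ 1]) auto
lemma idl_P: "P \<in> idl P g R"
  unfolding idl_def using r_0 r_1 by (intro CollectI exI[of _ 1] exI[of _ 0]) auto
lemma good_iff: "good P g R \<longleftrightarrow> 1 \<notin> idl P g R"
  unfolding good_def idl_def by auto
lemma idl_sum: "(\<And>i. i \<in> A \<Longrightarrow> h i \<in> idl P g R) \<Longrightarrow> sum h A \<in> idl P g R"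
  by (induction A rule: infinite_finite_induct) (auto intro: idl_0 idl_add)
lemma idl_poly: "(\<And>i. coeff A i \<in> idl P g R) \<Longrightarrow> y \<in> R \<Longrightarrow> poly A y \<in> idl P g R"
  unfolding poly_altdef by (intro idl_sum) (metis idl_mult mult.commute r_pow)

end

lemma exists_maxring:
  assumes R0: "ring_in b g R0" "good P g R0"
  shows "\<exists>V. R0 \<subseteq> V \<and> ring_in b g V \<and> good P g V \<and> (\<forall>R. ring_in b g R \<and> good P g R \<and> V \<subseteq> R \<longrightarrow> R = V)"
proof -
  define A where "A = {R. ring_in b g R \<and> good P g R \<and> R0 \<subseteq> R}"
  have "A \<noteq> {}" using R0 A_def by blast
  moreover have "\<Union>C \<in> A" if C: "C \<noteq> {}" "subset.chain A C" for C
  proof -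
    have CA: "C \<subseteq> A" and ch: "\<And>X Y. X \<in> C \<Longrightarrow> Y \<in> C \<Longrightarrow> X \<subseteq> Y \<or> Y \<subseteq> X"
      using C(2) unfolding subset_chain_def by blast+
    obtain X0 where X0: "X0 \<in> C" using C(1) by blast
    have memb: "\<And>X. X \<in> C \<Longrightarrow> ring_in b g X \<and> good P g X \<and> R0 \<subseteq> X" using CA A_def by blast
    have two: "\<exists>Z\<in>C. x \<in> Z \<and> y \<in> Z" if xy: "x \<in> \<Union>C" "y \<in> \<Union>C" for x y
    proof -
      obtain X Y where "X \<in> C" "Y \<in> C" "x \<in> X" "y \<in> Y" using xy by blast
      then show ?thesis using ch[of X Y] by blast
    qed
    have "ring_in b g (\<Union>C)"
      unfolding ring_in_def
    proof (intro conjI ballI)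
      show "\<Union>C \<subseteq> rat_field_gen b" using memb unfolding ring_in_def by blast
      show "1 \<in> \<Union>C" using memb[OF X0] X0 unfolding ring_in_def by blast
      show "g \<in> \<Union>C" using memb[OF X0] X0 unfolding ring_in_def by blast
    next
      fix x y assume "x \<in> \<Union>C" "y \<in> \<Union>C"
      then obtain Z where "Z \<in> C" "x \<in> Z" "y \<in> Z" using two by blast
      then show "x + y \<in> \<Union>C" "x * y \<in> \<Union>C" using memb[of Z] unfolding ring_in_def by blast+
    next
      fix x assume "x \<in> \<Union>C"
      then obtain Z where "Z \<in> C" "x \<in> Z" by blast
      then show "- x \<in> \<Union>C" using memb[of Z] unfolding ring_in_def by blast
    qed
    moreover have "good P g (\<Union>C)"
      unfolding good_def
    proof (intro ballI)
      fix x y assume "x \<in> \<Union>C" "y \<in> \<Union>C"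
      then obtain Z where "Z \<in> C" "x \<in> Z" "y \<in> Z" using two by blast
      then show "x * P + y * g \<noteq> 1" using memb[of Z] unfolding good_def by blast
    qed
    moreover have "R0 \<subseteq> \<Union>C" using memb[OF X0] X0 by blast
    ultimately show ?thesis unfolding A_def by blast
  qed
  ultimately obtain V where V: "V \<in> A" "\<forall>X\<in>A. V \<subseteq> X \<longrightarrow> X = V"
    using subset_Zorn_nonempty[of A] by blast
  have "R0 \<subseteq> V \<and> ring_in b g V \<and> good P g V" using V(1) unfolding A_def by blast
  moreover have "\<forall>R. ring_in b g R \<and> good P g R \<and> V \<subseteq> R \<longrightarrow> R = V"
  proof (intro allI impI)
    fix R assume R: "ring_in b g R \<and> good P g R \<and> V \<subseteq> R"
    then have "R \<in> A" using \<open>R0 \<subseteq> V \<and> ring_in b g V \<and> good P g V\<close> unfolding A_def by blast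
    then show "R = V" using V(2) R by blast
  qed
  ultimately show ?thesis by blast
qed



locale maxring =
  fixes b g P :: complex and V :: "complex set"
  assumes ring: "ring_in b g V" and gd: "good P g V"
    and maxi: "\<And>R. ring_in b g R \<Longrightarrow> good P g R \<Longrightarrow> V \<subseteq> R \<Longrightarrow> R = V"
    and PV: "P \<in> V"
begin

abbreviation "I \<equiv> idl P g V"

lemma one_notin: "1 \<notin> I" using gd good_iff[OF ring] by blast
lemma I_V: "x \<in> I \<Longrightarrow> x \<in> V" using idl_sub[OF ring PV] .
lemma V_K: "x \<in> V \<Longrightarrow> x \<in> rat_field_gen b" using r_K[OF ring] .

lemma notin_adj:
  assumes y: "y \<in> rat_field_gen b" "y \<notin> V"
  shows "\<exists>A. (\<forall>i. coeff A i \<in> I) \<and> poly A y = 1"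
proof -
  have "\<not> good P g (adj V y)"
  proof
    assume "good P g (adj V y)"
    then have "adj V y = V" using maxi adj_ring[OF ring y(1)] by blast
    then show False using adj_ring(3)[OF ring y(1)] y(2) by blast
  qed
  then obtain b1 b2 where bb: "b1 \<in> adj V y" "b2 \<in> adj V y" "b1 * P + b2 * g = 1"
    unfolding good_def by blast
  obtain A1 where A1: "\<forall>i. coeff A1 i \<in> V" "b1 = poly A1 y" using bb(1) unfolding adj_def by blast
  obtain A2 where A2: "\<forall>i. coeff A2 i \<in> V" "b2 = poly A2 y" using bb(2) unfolding adj_def by blast
  have "\<forall>i. coeff (smult P A1 + smult g A2) i \<in> I"
  proof
    fix i show "coeff (smult P A1 + smult g A2) i \<in> I"
      unfolding idl_def using A1 A2
      by (intro CollectI exI[of _ "coeff A1 i"] exI[of _ "coeff A2 i"]) (auto simp: algebra_simps)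
  qed
  moreover have "poly (smult P A1 + smult g A2) y = 1" using bb(3) A1 A2 by (simp add: algebra_simps)
  ultimately show ?thesis by blast
qed

lemma C1: assumes x: "x \<in> I" shows "inverse (1 - x) \<in> V"
proof (rule ccontr)
  assume nin: "inverse (1 - x) \<notin> V"
  have x1: "1 - x \<noteq> 0" using x one_notin by auto
  have xV: "x \<in> V" using I_V x .
  have oxV: "1 - x \<in> V" using r_diff[OF ring r_1[OF ring] xV] .
  have "inverse (1 - x) \<in> rat_field_gen b" using K_inverse V_K oxV by blast
  then obtain A where A: "\<forall>i. coeff A i \<in> I" "poly A (inverse (1 - x)) = 1"
    using notin_adj nin by blast
  have "poly (reflect_poly A) (1 - x) = (1 - x) ^ degree A"
    using poly_reflect_poly_nz[OF x1, of A] A(2) by simp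
  moreover have "poly (reflect_poly A) (1 - x) \<in> I"
    using A(1) idl_0[OF ring] oxV by (intro idl_poly[OF ring]) (auto simp: coeff_reflect_poly)
  ultimately have i1: "(1 - x) ^ degree A \<in> I" by simp
  have i2: "1 - (1 - x) ^ n \<in> I" for n
  proof (induction n)
    case 0 then show ?case using idl_0[OF ring] by simp
  next
    case (Suc n)
    have e: "1 - (1 - x) ^ Suc n = (1 - (1 - x) ^ n) + (1 - x) ^ n * x" by (simp add: algebra_simps)
    have mm: "(1 - x) ^ n * x \<in> I" using idl_mult[OF ring r_pow[OF ring oxV] x] .
    show ?case unfolding e by (rule idl_add[OF ring Suc mm])
  qed
  have "(1 - (1 - x) ^ degree A) + (1 - x) ^ degree A \<in> I" using idl_add[OF ring i2 i1] .
  then have "1 \<in> I" by simp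
  then show False using one_notin by simp
qed

lemma reduce:
  assumes x0: "x \<noteq> 0" and A: "\<forall>i. coeff A i \<in> I" "poly A x = 1"
    and B: "\<forall>i. coeff B i \<in> I" "poly B (inverse x) = 1" and deg: "degree B \<le> degree A"
  shows "\<exists>A'. (\<forall>i. coeff A' i \<in> I) \<and> poly A' x = 1 \<and> degree A' < degree A"
proof -
  define n where "n = degree A"
  define m where "m = degree B"
  have m0: "m \<noteq> 0"
  proof
    assume "m = 0"
    then have "poly B (inverse x) = coeff B 0" unfolding m_def by (simp add: poly_altdef)
    then show False using B one_notin by metis
  qed
  have mn: "m \<le> n" using deg m_def n_def by simp
  define Rb where "Rb = reflect_poly B"
  have pRb: "poly Rb x = x ^ m" unfolding Rb_def m_def using poly_reflect_poly_nz[of "x" B] x0 B(2)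
    by (simp add: poly_reflect_poly_nz)
  have cRb: "coeff Rb i \<in> I" for i using B(1) idl_0[OF ring] by (auto simp: Rb_def coeff_reflect_poly)
  have cRbm: "coeff Rb m = coeff B 0" by (simp add: Rb_def m_def coeff_reflect_poly)
  have dRb: "degree Rb \<le> m" unfolding Rb_def m_def by (rule degree_reflect_poly_le)
  define b0 where "b0 = coeff B 0"
  have b0I: "b0 \<in> I" using B(1) b0_def by simp
  have b01: "1 - b0 \<noteq> 0" using b0I one_notin by auto
  define u where "u = inverse (1 - b0)"
  have uV: "u \<in> V" using C1[OF b0I] u_def by simp
  define T where "T = smult u (Rb - monom b0 m)"
  have pT: "poly T x = x ^ m" unfolding T_def using pRb b01 by (simp add: poly_monom u_def field_simps)
  have cT: "coeff T i = (if i = m then 0 else u * coeff Rb i)" for i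
    unfolding T_def using cRbm by (simp add: coeff_monom b0_def)
  have cTI: "coeff T i \<in> I" for i unfolding cT using idl_0[OF ring] idl_mult[OF ring uV cRb] by simp
  have dT: "degree T < m"
  proof -
    have "degree T \<le> m - 1"
    proof (rule degree_le, intro allI impI)
      fix i assume "m - 1 < i"
      then have "i = m \<or> m < i" by auto
      then show "coeff T i = 0" unfolding cT using dRb by (auto simp: coeff_eq_0)
    qed
    then show ?thesis using m0 by simp
  qed
  define T' where "T' = monom 1 (n - m) * T"
  have pT': "poly T' x = x ^ n" unfolding T'_def using pT mn by (simp add: poly_monom power_add[symmetric])
  have cT'I: "coeff T' i \<in> I" for i unfolding T'_def coeff_monom_mult using cTI idl_0[OF ring] by simp
  have dT': "degree T' < n"
  proof -
    have "degree T' \<le> degree (monom (1::complex) (n - m)) + degree T"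
      unfolding T'_def by (rule degree_mult_le)
    also have "\<dots> = (n - m) + degree T" by (simp add: degree_monom_eq)
    finally show ?thesis using dT mn by simp
  qed
  define an where "an = coeff A n"
  have anV: "an \<in> V" using A(1) I_V an_def by simp
  define A' where "A' = (A - monom an n) + smult an T'"
  have "poly A' x = 1" unfolding A'_def using A(2) pT' by (simp add: poly_monom)
  moreover have "\<forall>i. coeff A' i \<in> I"
  proof
    fix i
    have "coeff (A - monom an n) i \<in> I"
      using A(1) idl_0[OF ring] by (auto simp: coeff_monom an_def)
    moreover have "coeff (smult an T') i \<in> I" using idl_mult[OF ring anV cT'I] by simp
    ultimately show "coeff A' i \<in> I" unfolding A'_def using idl_add[OF ring] by simp
  qed
  moreover have "degree A' < n"
  proof -
    have n0: "n \<noteq> 0" using m0 mn by simp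
    have "degree (A - monom an n) \<le> n - 1"
    proof (rule degree_le, intro allI impI)
      fix i assume "n - 1 < i"
      then have "i = n \<or> n < i" by auto
      then show "coeff (A - monom an n) i = 0" by (auto simp: coeff_monom an_def coeff_eq_0 n_def)
    qed
    then have "degree (A - monom an n) < n" using n0 by simp
    moreover have "degree (smult an T') < n" using dT' by (meson degree_smult_le le_less_trans)
    ultimately show ?thesis unfolding A'_def by (rule degree_add_less)
  qed
  ultimately show ?thesis unfolding n_def by blast
qed

lemma val:
  assumes xK: "x \<in> rat_field_gen b" and x0: "x \<noteq> 0"
  shows "x \<in> V \<or> inverse x \<in> V"
proof (rule ccontr)
  assume nn: "\<not> (x \<in> V \<or> inverse x \<in> V)"
  define QA where "QA = (\<lambda>A. (\<forall>i. coeff A i \<in> I) \<and> poly A x = 1)"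
  define QB where "QB = (\<lambda>A. (\<forall>i. coeff A i \<in> I) \<and> poly A (inverse x) = 1)"
  obtain A0 where "QA A0" using notin_adj[OF xK] nn QA_def by blast
  then obtain A where A: "QA A" and Amin: "\<And>A'. QA A' \<Longrightarrow> degree A \<le> degree A'"
    using ex_has_least_nat[of QA A0 degree] by blast
  obtain B0 where "QB B0" using notin_adj[OF K_inverse[OF xK]] nn QB_def by blast
  then obtain B where B: "QB B" and Bmin: "\<And>B'. QB B' \<Longrightarrow> degree B \<le> degree B'"
    using ex_has_least_nat[of QB B0 degree] by blast
  show False
  proof (cases "degree B \<le> degree A")
    case True
    then obtain A' where "QA A'" "degree A' < degree A"
      using reduce[OF x0, of A B] A B QA_def QB_def by blast
    then show False using Amin by fastforce
  next
    case False
    have "inverse x \<noteq> 0" using x0 by simp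
    moreover have "poly A (inverse (inverse x)) = 1" using A QA_def by simp
    ultimately obtain B' where "QB B'" "degree B' < degree B"
      using reduce[of "inverse x" B A] A B QA_def QB_def False by fastforce
    then show False using Bmin by fastforce
  qed
qed

end


lemma mpr_smult: "map_poly (of_rat::rat\<Rightarrow>'a::field_char_0) (smult c q) = smult (of_rat c) (map_poly of_rat q)"
  by (rule poly_eqI) (simp add: coeff_map_poly of_rat_mult)

lemma K_poly:
  assumes F: "F \<noteq> 0" "poly (map_poly of_rat F) b = (0::complex)" and x: "x \<in> rat_field_gen b"
  shows "\<exists>H. x = poly (map_poly of_rat H) b"
proof -
  define ev where "ev = (\<lambda>H::rat poly. poly (map_poly (of_rat::rat\<Rightarrow>complex) H) b)"
  have ev_mult: "ev (A * B) = ev A * ev B" for A B by (simp add: ev_def mpr_mult)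
  have ev_add: "ev (A + B) = ev A + ev B" for A B by (simp add: ev_def mpr_add)
  have ev_const: "ev [:c:] = of_rat c" for c by (simp add: ev_def map_poly_pCons)
  obtain pp q where pq: "ev q \<noteq> 0" "x = ev pp / ev q" using x unfolding K_iff ev_def by blast
  define Z where "Z = (\<lambda>H::rat poly. H \<noteq> 0 \<and> ev H = 0)"
  have "Z F" using F Z_def ev_def by simp
  then obtain m where m: "Z m" and mmin: "\<And>H. Z H \<Longrightarrow> degree m \<le> degree H"
    using ex_has_least_nat[of Z F degree] by blast
  define d where "d = gcd m q"
  obtain s t where st: "bezout_coefficients m q = (s, t)" by (cases "bezout_coefficients m q")
  have bz: "s * m + t * q = d" using bezout_coefficients[OF st] d_def by simp
  have dm: "d dvd m" and dq: "d dvd q" using d_def by auto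
  obtain e where e: "m = d * e" using dm by (elim dvdE)
  have m0: "m \<noteq> 0" using m Z_def by simp
  then have d0: "d \<noteq> 0" and e0: "e \<noteq> 0" using e by auto
  have evm: "ev m = 0" using m Z_def by simp
  have degd: "degree d = 0"
  proof (rule ccontr)
    assume dd: "degree d \<noteq> 0"
    show False
    proof (cases "degree e = 0")
      case True
      then obtain c where c: "e = [:c:]" by (metis degree_eq_zeroE)
      then have "c \<noteq> 0" using e0 by simp
      moreover have "ev d * of_rat c = 0" using evm e c ev_mult ev_const by metis
      ultimately have "ev d = 0" by simp
      moreover obtain h where "q = d * h" using dq by (elim dvdE)
      ultimately have "ev q = 0" using ev_mult by simp
      then show False using pq by simp
    next
      case False
      have dg: "degree m = degree d + degree e" using e d0 e0 by (simp add: degree_mult_eq)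
      have "ev d * ev e = 0" using evm e ev_mult by metis
      then have "ev d = 0 \<or> ev e = 0" by simp
      then show False
      proof
        assume "ev d = 0" then have "degree m \<le> degree d" using mmin Z_def d0 by blast
        then show False using dg False by simp
      next
        assume "ev e = 0" then have "degree m \<le> degree e" using mmin Z_def e0 by blast
        then show False using dg dd by simp
      qed
    qed
  qed
  then obtain c where c: "d = [:c:]" by (metis degree_eq_zeroE)
  have c0: "c \<noteq> 0" using c d0 by simp
  have "ev s * ev m + ev t * ev q = of_rat c" using bz c ev_mult ev_add ev_const by metis
  then have tq: "ev t * ev q = of_rat c" using evm by simp
  define H where "H = [:inverse c:] * (pp * t)"
  have "ev H = of_rat (inverse c) * ev pp * ev t" unfolding H_def by (simp add: ev_def mpr_smult mpr_mult)
  also have "\<dots> = ev pp / ev q"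
  proof -
    have "ev q * ev t * of_rat (inverse c) = 1" using tq c0 by (simp add: mult.commute of_rat_inverse)
    then show ?thesis using pq(1) by (simp add: field_simps)
  qed
  finally show ?thesis using pq(2) ev_def by metis
qed

locale setting = maxring b "inverse b" "of_int p" V for b :: complex and p :: int and V +
  fixes f :: "int poly"
  assumes root: "poly (map_poly of_int f) b = 0" and a0: "coeff f 0 \<noteq> 0" and irr: "irreducible f"
    and pprime: "prime p" and pdvd: "p dvd lead_coeff f" and prim: "content f = 1"
begin

abbreviation "K \<equiv> rat_field_gen b"
abbreviation "gm \<equiv> inverse b"
abbreviation "PP \<equiv> (of_int p :: complex)"

lemma b0: "b \<noteq> 0"
proof
  assume "b = 0"
  with root have "poly (map_poly (of_int::int\<Rightarrow>complex) f) 0 = 0" by simp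
  then show False using a0 by (simp add: poly_0_coeff_0 coeff_map_poly)
qed

lemma P0: "PP \<noteq> 0" using pprime by auto

lemma V_int: "of_int n \<in> V" using r_int[OF ring] .
lemma V_gm: "gm \<in> V" using r_g[OF ring] .
lemma V_1: "1 \<in> V" using r_1[OF ring] .
lemma V_mult: "x \<in> V \<Longrightarrow> y \<in> V \<Longrightarrow> x * y \<in> V" using r_mult[OF ring] .
lemma V_add: "x \<in> V \<Longrightarrow> y \<in> V \<Longrightarrow> x + y \<in> V" using r_add[OF ring] .
lemma V_pow: "x \<in> V \<Longrightarrow> x ^ n \<in> V" using r_pow[OF ring] .

lemma unit_int: assumes "\<not> p dvd u" shows "inverse (of_int u :: complex) \<in> V"
proof -
  have u0: "u \<noteq> 0" using assms by auto
  have "coprime p u" using prime_imp_coprime[OF pprime assms] .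
  obtain s t where st: "bezout_coefficients p u = (s, t)" by (cases "bezout_coefficients p u")
  have "s * p + t * u = gcd p u" using bezout_coefficients[OF st] .
  then have bz: "s * p + t * u = 1" using \<open>coprime p u\<close> by simp
  define x where "x = (of_int s :: complex) * PP"
  have xI: "x \<in> I" unfolding x_def idl_def using V_int r_0[OF ring]
    by (intro CollectI exI[of _ "of_int s"] exI[of _ 0]) auto
  have "(1 - x) = of_int t * of_int u"
  proof -
    have "(of_int (s * p + t * u) :: complex) = 1" using bz by simp
    then show ?thesis unfolding x_def by (simp add: algebra_simps)
  qed
  moreover have "inverse (1 - x) \<in> V" using C1[OF xI] .
  ultimately have "inverse (of_int t * of_int u :: complex) \<in> V" by simp
  then have "of_int t * inverse (of_int t * of_int u :: complex) \<in> V" using V_mult V_int by blast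
  moreover have "t \<noteq> 0"
  proof
    assume "t = 0"
    then have "x = 1" using \<open>(1 - x) = of_int t * of_int u\<close> by simp
    then show False using one_notin xI by simp
  qed
  ultimately show ?thesis by (simp add: field_simps)
qed

lemma intdec: assumes "m \<noteq> 0" shows "\<exists>k. PP ^ k * inverse (of_int m) \<in> V"
proof -
  have "\<not> is_unit p" using pprime by auto
  then obtain y where y: "m = p ^ multiplicity p m * y" "\<not> p dvd y"
    using multiplicity_decompose'[OF assms] by metis
  have my: "(of_int m :: complex) = PP ^ multiplicity p m * of_int y"
    using arg_cong[OF y(1), of "of_int :: int \<Rightarrow> complex"] by simp
  have y0: "(of_int y :: complex) \<noteq> 0" using y(2) by auto
  have "PP ^ multiplicity p m * inverse (of_int m) = inverse (of_int y)"
    unfolding my using P0 y0 by (simp add: field_simps)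
  then show ?thesis using unit_int[OF y(2)] by metis
qed

lemma beta_bound: "\<exists>k. PP ^ k * b \<in> V"
proof -
  have gm0: "gm \<noteq> 0" using b0 by simp
  have e1: "poly (reflect_poly (map_poly (of_int::int\<Rightarrow>complex) f)) gm = gm ^ degree (map_poly (of_int::int\<Rightarrow>complex) f) * poly (map_poly of_int f) (inverse gm)"
    by (rule poly_reflect_poly_nz[OF gm0])
  have r0: "poly (map_poly (of_int::int\<Rightarrow>complex) (reflect_poly f)) gm = 0"
    unfolding mpi_reflect e1 using root b0 by simp
  obtain a G where aG: "reflect_poly f = pCons a G" by (rule pCons_cases)
  have a: "a = lead_coeff f" using coeff_0_reflect_poly[of f] aG by simp
  have fnz: "f \<noteq> 0" using a0 by auto
  then have anz: "a \<noteq> 0" using a by simp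
  define X where "X = poly (map_poly (of_int::int\<Rightarrow>complex) G) gm"
  have h: "of_int a + gm * X = 0" using r0 unfolding aG X_def by (simp add: map_poly_pCons)
  then have "of_int a = - (gm * X)" by (simp add: eq_neg_iff_add_eq_0)
  then have "of_int a * b = - ((gm * b) * X)" by (simp add: algebra_simps)
  also have "gm * b = 1" using b0 by simp
  finally have ab: "of_int a * b = - X" by simp
  have "X \<in> V" unfolding X_def
    using V_int V_gm by (intro r_poly[OF ring]) (auto simp: coeff_map_poly)
  then have abV: "of_int a * b \<in> V" unfolding ab by (rule r_uminus[OF ring])
  obtain k where k: "PP ^ k * inverse (of_int a) \<in> V" using intdec[OF anz] by blast
  have "PP ^ k * b = (PP ^ k * inverse (of_int a)) * (of_int a * b)" using anz by (simp add: field_simps)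
  then show ?thesis using V_mult[OF k abV] by metis
qed

lemma rat_bound: "\<exists>k. PP ^ k * of_rat c \<in> V"
proof -
  obtain n m where nm: "m > 0" "(of_rat c :: complex) = of_int n / of_int m"
    using Rats_cases'[OF Rats_of_rat[of c]] by metis
  obtain k where k: "PP ^ k * inverse (of_int m) \<in> V" using intdec[of m] nm(1) by auto
  have "PP ^ k * of_rat c = of_int n * (PP ^ k * inverse (of_int m))" using nm by (simp add: field_simps)
  then show ?thesis using V_mult[OF V_int k] by metis
qed

lemma poly_bound: "\<exists>k. PP ^ k * poly (map_poly of_rat H) b \<in> V"
proof (induction H)
  case 0 then show ?case using r_0[OF ring] by simp
next
  case (pCons c H)
  obtain k1 where k1: "PP ^ k1 * of_rat c \<in> V" using rat_bound by blast
  obtain kb where kb: "PP ^ kb * b \<in> V" using beta_bound by blast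
  obtain k2 where k2: "PP ^ k2 * poly (map_poly of_rat H) b \<in> V" using pCons.IH by blast
  have "PP ^ (k1 + kb + k2) * poly (map_poly of_rat (pCons c H)) b =
        PP ^ (kb + k2) * (PP ^ k1 * of_rat c) + PP ^ k1 * ((PP ^ kb * b) * (PP ^ k2 * poly (map_poly of_rat H) b))"
    by (simp add: map_poly_pCons power_add algebra_simps)
  moreover have "PP ^ (kb + k2) * (PP ^ k1 * of_rat c) + PP ^ k1 * ((PP ^ kb * b) * (PP ^ k2 * poly (map_poly of_rat H) b)) \<in> V"
    using V_add[OF V_mult[OF V_pow[OF V_int] k1] V_mult[OF V_pow[OF V_int] V_mult[OF kb k2]]] by simp
  ultimately show ?case by (intro exI[of _ "k1 + kb + k2"]) (simp only:)
qed

lemma S_bound: assumes "x \<in> K" shows "\<exists>k. PP ^ k * x \<in> V"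
proof -
  define F where "F = map_poly (of_int::int\<Rightarrow>rat) f"
  have fnz: "f \<noteq> 0" using a0 by auto
  have "F \<noteq> 0" using fnz unfolding F_def by (simp add: map_poly_eq_0_iff)
  moreover have "map_poly (of_rat::rat\<Rightarrow>complex) F = map_poly of_int f"
    unfolding F_def by (rule poly_eqI) (simp add: coeff_map_poly)
  then have "poly (map_poly (of_rat::rat\<Rightarrow>complex) F) b = 0" using root by simp
  ultimately obtain H where "x = poly (map_poly of_rat H) b" using K_poly assms by blast
  then show ?thesis using poly_bound by blast
qed

end


context setting
begin

definition Q :: "int \<Rightarrow> complex" where "Q k = PP powi k"

lemma Q_add: "Q (a + c) = Q a * Q c" unfolding Q_def using P0 by (simp add: power_int_add)
lemma Q_nat: "Q (int n) = PP ^ n" unfolding Q_def by (simp add: power_int_of_nat)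
lemma Q_0: "Q 0 = 1" unfolding Q_def by simp
lemma Q_pow: "Q a ^ n = Q (a * int n)" unfolding Q_def by (simp add: power_int_mult power_int_of_nat)
lemma Q_inv: "inverse (Q a) = Q (- a)" unfolding Q_def by (simp add: power_int_minus)
lemma Q_nz: "Q a \<noteq> 0" unfolding Q_def using P0 by simp
lemma Q_K: "Q a \<in> K"
proof (cases "a \<ge> 0")
  case True
  then have "Q a = PP ^ nat a" using Q_nat[of "nat a"] by simp
  then show ?thesis using K_power[OF K_int] by simp
next
  case False
  then have "Q a = inverse (PP ^ nat (- a))" using Q_nat[of "nat (-a)"] Q_inv[of "-a"] by simp
  then show ?thesis using K_inverse[OF K_power[OF K_int]] by simp
qed

definition Lset :: "complex \<Rightarrow> real set" where
  "Lset x = {r. \<exists>k::int. \<exists>e::nat. e > 0 \<and> r = of_int k / of_nat e \<and> x ^ e * Q (- k) \<in> V}"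

definition w :: "complex \<Rightarrow> real" where "w x = Sup (Lset x)"

lemma LsetI: "e > 0 \<Longrightarrow> x ^ e * Q (- k) \<in> V \<Longrightarrow> of_int k / of_nat e \<in> Lset x"
  unfolding Lset_def by blast

lemma Lset_mult:
  assumes "r1 \<in> Lset x" "r2 \<in> Lset y" shows "r1 + r2 \<in> Lset (x * y)"
proof -
  obtain k1 e1 where 1: "e1 > 0" "r1 = of_int k1 / of_nat e1" "x ^ e1 * Q (- k1) \<in> V"
    using assms(1) unfolding Lset_def by blast
  obtain k2 e2 where 2: "e2 > 0" "r2 = of_int k2 / of_nat e2" "y ^ e2 * Q (- k2) \<in> V"
    using assms(2) unfolding Lset_def by blast
  have "r1 + r2 = of_int (k1 * int e2 + k2 * int e1) / of_nat (e1 * e2)"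
    using 1 2 by (simp add: field_simps)
  moreover have "(x * y) ^ (e1 * e2) * Q (- (k1 * int e2 + k2 * int e1)) =
      (x ^ e1 * Q (- k1)) ^ e2 * (y ^ e2 * Q (- k2)) ^ e1"
  proof -
    have "(x ^ e1 * Q (- k1)) ^ e2 * (y ^ e2 * Q (- k2)) ^ e1 =
          x ^ (e1 * e2) * y ^ (e1 * e2) * (Q (- k1) ^ e2 * Q (- k2) ^ e1)"
      by (simp add: power_mult_distrib power_mult[symmetric] mult.commute mult.left_commute)
    also have "Q (- k1) ^ e2 * Q (- k2) ^ e1 = Q (- (k1 * int e2 + k2 * int e1))"
      by (simp add: Q_pow Q_add[symmetric] algebra_simps)
    finally show ?thesis by (simp add: power_mult_distrib)
  qed
  moreover have "(x ^ e1 * Q (- k1)) ^ e2 * (y ^ e2 * Q (- k2)) ^ e1 \<in> V"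
    using V_mult V_pow 1(3) 2(3) by blast
  moreover have "e1 * e2 > 0" using 1 2 by simp
  ultimately have "(x * y) ^ (e1 * e2) * Q (- (k1 * int e2 + k2 * int e1)) \<in> V"
    and "r1 + r2 = of_int (k1 * int e2 + k2 * int e1) / of_nat (e1 * e2)" and "e1 * e2 > 0" by simp_all
  then show ?thesis unfolding Lset_def by blast
qed

lemma Lset_dich:
  assumes x: "x \<in> K" "x \<noteq> 0" and e: "e > 0"
  shows "of_int k / of_nat e \<in> Lset x \<or> of_int (- k) / of_nat e \<in> Lset (inverse x)"
proof -
  define z where "z = x ^ e * Q (- k)"
  have zK: "z \<in> K" unfolding z_def using x by (intro K_mult K_power Q_K)
  have z0: "z \<noteq> 0" unfolding z_def using x Q_nz by simp
  have "inverse z = inverse x ^ e * Q (- (- k))"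
    unfolding z_def by (simp add: Q_inv[symmetric] power_inverse)
  from val[OF zK z0] show ?thesis
  proof
    assume "z \<in> V" then show ?thesis unfolding z_def using LsetI[OF e] by blast
  next
    assume "inverse z \<in> V"
    then have "inverse x ^ e * Q (- (- k)) \<in> V" using \<open>inverse z = _\<close> by simp
    then show ?thesis using LsetI[OF e] by blast
  qed
qed

lemma Lset_ne: assumes "x \<in> K" shows "Lset x \<noteq> {}"
proof -
  obtain k where "PP ^ k * x \<in> V" using S_bound[OF assms] by blast
  then have "x ^ 1 * Q (- (- int k)) \<in> V" by (simp add: Q_nat mult.commute)
  then show ?thesis using LsetI[of 1 x "- int k"] by auto
qed

lemma Pinv_notin: "inverse PP \<notin> V"
proof
  assume "inverse PP \<in> V"
  then have "inverse PP * PP + 0 * gm \<in> I" unfolding idl_def using r_0[OF ring] by blast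
  then show False using one_notin P0 by simp
qed

lemma Lset_bdd: assumes x: "x \<in> K" "x \<noteq> 0" shows "\<exists>j. \<forall>r\<in>Lset x. r \<le> j"
proof -
  obtain j where j: "PP ^ j * inverse x \<in> V" using S_bound[OF K_inverse[OF x(1)]] by blast
  have "r \<le> of_nat j" if r: "r \<in> Lset x" for r
  proof (rule ccontr)
    assume nle: "\<not> r \<le> of_nat j"
    obtain k e where ke: "e > 0" "r = of_int k / of_nat e" "x ^ e * Q (- k) \<in> V"
      using r unfolding Lset_def by blast
    have "of_nat j * of_nat e < (of_int k :: real)" using nle ke(1,2) by (simp add: field_simps)
    then have kj: "int j * int e < k" by (metis of_int_of_nat_eq of_int_less_iff of_nat_mult of_int_mult)
    have "(PP ^ j * inverse x) ^ e * (x ^ e * Q (- k)) = Q (int j * int e - k)"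
    proof -
      have "(PP ^ j * inverse x) ^ e * (x ^ e * Q (- k)) = (PP ^ j) ^ e * Q (- k) * (inverse x ^ e * x ^ e)"
        by (simp add: power_mult_distrib mult_ac)
      also have "inverse x ^ e * x ^ e = 1" using x(2) by (simp add: power_inverse[symmetric] field_simps)
      also have "(PP ^ j) ^ e = Q (int j * int e)" using Q_nat[of "j * e"] by (simp add: power_mult)
      finally show ?thesis by (simp add: Q_add[symmetric])
    qed
    then have q1: "Q (int j * int e - k) \<in> V" using V_mult V_pow j ke(3) by metis
    define n where "n = nat (k - int j * int e - 1)"
    have "Q (int j * int e - k) * Q (int n) = Q (- 1)"
      unfolding n_def using kj by (simp add: Q_add[symmetric])
    then have "Q (- 1) \<in> V" using V_mult[OF q1, of "Q (int n)"] Q_nat[of n] V_pow[OF V_int] by metis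
    then show False using Pinv_notin Q_inv[of 1] by (simp add: Q_def)
  qed
  then show ?thesis by blast
qed

lemma Lset_bdd_above: assumes "x \<in> K" "x \<noteq> 0" shows "bdd_above (Lset x)"
proof -
  obtain j where "\<forall>r\<in>Lset x. r \<le> j" using Lset_bdd[OF assms] by blast
  then show ?thesis by (intro bdd_aboveI) auto
qed

lemma w_upper: "x \<in> K \<Longrightarrow> x \<noteq> 0 \<Longrightarrow> r \<in> Lset x \<Longrightarrow> r \<le> w x"
  unfolding w_def by (rule cSup_upper[OF _ Lset_bdd_above])

lemma w_least: "x \<in> K \<Longrightarrow> (\<And>r. r \<in> Lset x \<Longrightarrow> r \<le> c) \<Longrightarrow> w x \<le> c"
  unfolding w_def by (rule cSup_least[OF Lset_ne])

lemma w_super: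
  assumes x: "x \<in> K" "x \<noteq> 0" and y: "y \<in> K" "y \<noteq> 0"
  shows "w x + w y \<le> w (x * y)"
proof -
  have xy: "x * y \<in> K" "x * y \<noteq> 0" using x y K_mult by auto
  have "r1 \<le> w (x * y) - w y" if r1: "r1 \<in> Lset x" for r1
  proof -
    have "r2 \<le> w (x * y) - r1" if r2: "r2 \<in> Lset y" for r2
      using w_upper[OF xy Lset_mult[OF r1 r2]] by simp
    then have "w y \<le> w (x * y) - r1" using w_least[OF y(1)] by blast
    then show ?thesis by simp
  qed
  then have "w x \<le> w (x * y) - w y" using w_least[OF x(1)] by blast
  then show ?thesis by simp
qed

lemma w_inv:
  assumes x: "x \<in> K" "x \<noteq> 0"
  shows "0 \<le> w x + w (inverse x)"
proof (rule ccontr)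
  assume "\<not> 0 \<le> w x + w (inverse x)"
  then have "w x < - w (inverse x)" by simp
  then obtain q where q: "q \<in> \<rat>" "w x < q" "q < - w (inverse x)" using Rats_dense_in_real by blast
  obtain a c where ac: "0 < c" "q = of_int a / of_int c" using Rats_cases'[OF q(1)] by metis
  define e where "e = nat c"
  have e: "e > 0" "q = of_int a / of_nat e" using ac e_def by auto
  have xi: "inverse x \<in> K" "inverse x \<noteq> 0" using x K_inverse by auto
  from Lset_dich[OF x e(1), of a]
  show False
  proof
    assume "of_int a / of_nat e \<in> Lset x"
    then have "q \<le> w x" using w_upper[OF x] e(2) by simp
    then show False using q by simp
  next
    assume "of_int (- a) / of_nat e \<in> Lset (inverse x)"
    then have "- q \<le> w (inverse x)" using w_upper[OF xi] e(2) by simp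
    then show False using q by simp
  qed
qed

lemma w_mult:
  assumes x: "x \<in> K" "x \<noteq> 0" and y: "y \<in> K" "y \<noteq> 0"
  shows "w (x * y) = w x + w y"
proof -
  have xy: "x * y \<in> K" "x * y \<noteq> 0" using x y K_mult by auto
  have yi: "inverse y \<in> K" "inverse y \<noteq> 0" using y K_inverse by auto
  have "w (x * y) + w (inverse y) \<le> w (x * y * inverse y)" using w_super[OF xy yi] .
  also have "x * y * inverse y = x" using y by simp
  finally have "w (x * y) \<le> w x - w (inverse y)" by simp
  moreover have "0 \<le> w y + w (inverse y)" using w_inv[OF y] .
  ultimately have "w (x * y) \<le> w x + w y" by simp
  then show ?thesis using w_super[OF x y] by simp
qed

lemma w_V: assumes "z \<in> V" "z \<noteq> 0" shows "0 \<le> w z"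
proof -
  have "z ^ 1 * Q (- 0) \<in> V" using assms Q_0 by simp
  then have "of_int 0 / of_nat 1 \<in> Lset z" by (rule LsetI[rotated]) simp
  then show ?thesis using w_upper[OF V_K[OF assms(1)] assms(2)] by simp
qed

end


context setting
begin

lemma gm_pos_ex: "\<exists>e>0. gm ^ e * Q (- 1) \<in> V"
proof (rule ccontr)
  assume nex: "\<not> (\<exists>e>0. gm ^ e * Q (- 1) \<in> V)"
  have hb: "PP * b ^ e \<in> V" for e
  proof (cases "e = 0")
    case True then show ?thesis using V_int by simp
  next
    case False
    define z where "z = gm ^ e * Q (- 1)"
    have zK: "z \<in> K" unfolding z_def by (intro K_mult K_power K_inverse K_gen Q_K)
    have z0: "z \<noteq> 0" unfolding z_def using b0 Q_nz by simp
    have e0: "0 < e" using False by simp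
    have "z \<notin> V" using nex e0 unfolding z_def by blast
    then have "inverse z \<in> V" using val[OF zK z0] by auto
    moreover have "inverse z = PP * b ^ e"
      unfolding z_def using Q_inv[of "-1"] by (simp add: Q_def power_inverse mult.commute)
    ultimately show ?thesis by simp
  qed
  define a where "a = (\<lambda>i. coeff f i)"
  define d where "d = degree f"
  have ex: "\<exists>i. \<not> p dvd a i"
  proof (rule ccontr)
    assume "\<not> (\<exists>i. \<not> p dvd a i)"
    then have "\<forall>i. p dvd coeff f i" unfolding a_def by blast
    then have "[:p:] dvd f" by (simp add: const_poly_dvd_iff)
    then have "p dvd content f" by (simp add: const_poly_dvd_iff_dvd_content)
    then show False using prim prime_gt_1_int[OF pprime] by simp
  qed
  have bnd: "i \<le> d" if "\<not> p dvd a i" for i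
  proof (rule ccontr)
    assume "\<not> i \<le> d"
    then have "a i = 0" unfolding a_def d_def by (simp add: coeff_eq_0)
    then show False using that by simp
  qed
  obtain i1 where i1: "\<not> p dvd a i1" using ex by blast
  define i0 where "i0 = (GREATEST i. \<not> p dvd a i)"
  have i0: "\<not> p dvd a i0" unfolding i0_def by (rule GreatestI_nat[where P="\<lambda>i. \<not> p dvd a i", OF i1 bnd])
  have i0d: "i0 \<le> d" using bnd[OF i0] .
  have hi: "p dvd a i" if "i0 < i" for i
  proof (rule ccontr)
    assume "\<not> p dvd a i"
    then have "i \<le> i0" unfolding i0_def by (rule Greatest_le_nat[where P="\<lambda>i. \<not> p dvd a i", OF _ bnd])
    then show False using that by simp
  qed
  define J where "J = {gm * z | z. z \<in> V}"
  have J0: "0 \<in> J" unfolding J_def using r_0[OF ring] by force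
  have Jadd: "x \<in> J \<Longrightarrow> y \<in> J \<Longrightarrow> x + y \<in> J" for x y
  proof -
    assume "x \<in> J" "y \<in> J"
    then obtain z1 z2 where "z1 \<in> V" "z2 \<in> V" "x = gm * z1" "y = gm * z2" unfolding J_def by blast
    then have "x + y = gm * (z1 + z2)" "z1 + z2 \<in> V" using V_add by (auto simp: distrib_left)
    then show "x + y \<in> J" unfolding J_def by blast
  qed
  have Jsum: "(\<And>i. i \<in> A \<Longrightarrow> h i \<in> J) \<Longrightarrow> sum h A \<in> J" for A h
    by (induction A rule: infinite_finite_induct) (auto intro: J0 Jadd)
  have gb: "gm * b = 1" using b0 by simp
  have bg1: "b * gm = 1" using b0 by simp
  have bgn: "b ^ n * gm ^ n = 1" for n
    by (simp add: power_mult_distrib[symmetric] bg1)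
  have trm: "of_int (a i) * b ^ i * gm ^ i0 \<in> J" if "i \<noteq> i0" for i
  proof (cases "i < i0")
    case True
    have s1: "gm ^ i0 = gm ^ i * gm ^ (i0 - i)" using True by (simp add: power_add[symmetric])
    have s2: "gm ^ (i0 - i) = gm * gm ^ (i0 - i - 1)" using True
      by (metis Suc_diff_Suc diff_Suc_1 power_Suc zero_less_diff)
    have "of_int (a i) * b ^ i * gm ^ i0 = of_int (a i) * (b ^ i * gm ^ i) * gm ^ (i0 - i)"
      unfolding s1 by (simp only: mult.assoc)
    also have "\<dots> = gm * (of_int (a i) * gm ^ (i0 - i - 1))" unfolding bgn s2 by simp
    finally show ?thesis unfolding J_def using V_mult[OF V_int V_pow[OF V_gm]] by blast
  next
    case False
    then have gt: "i0 < i" using that by simp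
    obtain c where c: "a i = p * c" using hi[OF gt] by (elim dvdE)
    have s1: "b ^ i = b ^ i0 * b ^ (i - i0)" using gt by (simp add: power_add[symmetric])
    have s2: "b ^ (i - i0) = gm * b ^ (i - i0 + 1)"
    proof -
      have "gm * b ^ (i - i0 + 1) = (b * gm) * b ^ (i - i0)" by (simp add: mult_ac)
      then show ?thesis using bg1 by simp
    qed
    have "of_int (a i) * b ^ i * gm ^ i0 = of_int (a i) * (b ^ i0 * gm ^ i0) * b ^ (i - i0)"
      unfolding s1 by (simp only: mult_ac)
    also have "\<dots> = gm * (of_int c * (PP * b ^ (i - i0 + 1)))" unfolding bgn s2 c by (simp only: of_int_mult mult_ac mult_1_right mult_1_left)
    finally show ?thesis unfolding J_def using V_mult[OF V_int hb] by blast
  qed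
  have "0 = poly (map_poly of_int f) b * gm ^ i0" using root by simp
  also have "\<dots> = (\<Sum>i\<le>d. of_int (a i) * b ^ i * gm ^ i0)"
    by (simp add: ipoly_altdef a_def d_def sum_distrib_right)
  also have "\<dots> = of_int (a i0) * b ^ i0 * gm ^ i0 + (\<Sum>i\<in>{..d} - {i0}. of_int (a i) * b ^ i * gm ^ i0)"
    using i0d by (subst sum.remove[of _ i0]) auto
  also have "of_int (a i0) * b ^ i0 * gm ^ i0 = of_int (a i0)"
    using bgn[of i0] by (simp only: mult.assoc mult_1_right)
  finally have eq: "of_int (a i0) = - (\<Sum>i\<in>{..d} - {i0}. of_int (a i) * b ^ i * gm ^ i0)"
    by (simp add: eq_neg_iff_add_eq_0 add.commute)
  have "(\<Sum>i\<in>{..d} - {i0}. of_int (a i) * b ^ i * gm ^ i0) \<in> J"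
    by (rule Jsum) (use trm in auto)
  then obtain z where z: "z \<in> V" "(\<Sum>i\<in>{..d} - {i0}. of_int (a i) * b ^ i * gm ^ i0) = gm * z"
    unfolding J_def by blast
  have az: "of_int (a i0) = gm * (- z)" using eq z(2) by simp
  have u: "inverse (of_int (a i0) :: complex) \<in> V" using unit_int[OF i0] .
  have a00: "(of_int (a i0) :: complex) \<noteq> 0" using i0 by auto
  have "1 = gm * (- z * inverse (of_int (a i0)))" using az a00 by (simp add: field_simps)
  then have "0 * PP + (- z * inverse (of_int (a i0))) * gm = 1" by (simp add: mult.commute)
  moreover have "- z * inverse (of_int (a i0)) \<in> V" using V_mult[OF r_uminus[OF ring z(1)] u] .
  ultimately have "1 \<in> I" unfolding idl_def using r_0[OF ring] by force
  then show False using one_notin by simp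
qed

lemma w_gm: "0 < w gm"
proof -
  obtain e where e: "e > 0" "gm ^ e * Q (- 1) \<in> V" using gm_pos_ex by blast
  have "of_int 1 / of_nat e \<in> Lset gm" using LsetI[OF e(1), of gm 1] e(2) by simp
  then have "of_int 1 / of_nat e \<le> w gm" using w_upper[OF K_inverse[OF K_gen]] b0 by simp
  moreover have "(0::real) < of_int 1 / of_nat e" using e by simp
  ultimately show ?thesis by linarith
qed

definition vv :: "complex \<Rightarrow> real" where "vv x = (if x = 0 then 0 else 2 powr (- w x))"

lemma vv_nonneg: "0 \<le> vv x" unfolding vv_def by simp
lemma vv_zero: "vv x = 0 \<longleftrightarrow> x = 0" unfolding vv_def by simp

lemma vv_mult: assumes "x \<in> K" "y \<in> K" shows "vv (x * y) = vv x * vv y"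
proof (cases "x = 0 \<or> y = 0")
  case True then show ?thesis unfolding vv_def by auto
next
  case False
  then have "w (x * y) = w x + w y" using w_mult assms by blast
  then show ?thesis using False unfolding vv_def by (simp add: powr_add[symmetric])
qed

lemma ultra_key:
  assumes x: "x \<in> K" "x \<noteq> 0" and y: "y \<in> K" "y \<noteq> 0" and xy: "x + y \<noteq> 0" and t: "y / x \<in> V"
  shows "vv (x + y) \<le> vv x \<and> vv y \<le> vv x"
proof -
  define t where "t = y / x"
  have tK: "t \<in> K" "t \<noteq> 0" unfolding t_def using x y K_divide by auto
  have ty: "y = x * t" unfolding t_def using x by simp
  have "w y = w x + w t" unfolding ty using w_mult x tK by blast
  moreover have "0 \<le> w t" using w_V t tK t_def by blast
  ultimately have wy: "w x \<le> w y" by simp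
  define s where "s = 1 + t"
  have sV: "s \<in> V" unfolding s_def using V_add[OF V_1] t t_def by blast
  have xs: "x + y = x * s" unfolding s_def ty by (simp add: algebra_simps)
  have s0: "s \<noteq> 0" using xs xy by auto
  have "w (x + y) = w x + w s" unfolding xs using w_mult x V_K[OF sV] s0 by blast
  moreover have "0 \<le> w s" using w_V sV s0 by blast
  ultimately have ws: "w x \<le> w (x + y)" by simp
  show ?thesis unfolding vv_def using x y xy wy ws by (auto intro!: powr_mono)
qed

lemma vv_ultra: assumes x: "x \<in> K" and y: "y \<in> K" shows "vv (x + y) \<le> max (vv x) (vv y)"
proof -
  consider "x = 0" | "y = 0" | "x + y = 0" | "x \<noteq> 0" "y \<noteq> 0" "x + y \<noteq> 0" by blast
  then show ?thesis
  proof cases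
    case 1 then show ?thesis by simp
  next
    case 2 then show ?thesis by simp
  next
    case 3 then show ?thesis using vv_nonneg[of x] by (simp add: vv_def le_max_iff_disj)
  next
    case 4
    have "y / x \<in> K" "y / x \<noteq> 0" using x y 4 K_divide by auto
    then have "y / x \<in> V \<or> inverse (y / x) \<in> V" using val by blast
    then show ?thesis
    proof
      assume "y / x \<in> V"
      then show ?thesis using ultra_key[OF x 4(1) y 4(2) 4(3)] by simp
    next
      assume "inverse (y / x) \<in> V"
      then have "x / y \<in> V" by simp
      moreover have "y + x \<noteq> 0" using 4 by (simp add: add.commute)
      ultimately show ?thesis using ultra_key[OF y 4(2) x 4(1)] by (simp add: add.commute)
    qed
  qed
qed

lemma vv_gm: "vv gm < 1"
proof -
  have "vv gm = 2 powr (- w gm)" unfolding vv_def using b0 by simp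
  also have "\<dots> < 1" using w_gm by (intro powr_less_one) auto
  finally show ?thesis .
qed

lemma vv_abs: "abs_value_on K vv"
  unfolding abs_value_on_def
proof (intro conjI ballI)
  fix x assume "x \<in> K"
  show "0 \<le> vv x" by (rule vv_nonneg)
  show "vv x = 0 \<longleftrightarrow> x = 0" by (rule vv_zero)
next
  fix x y assume "x \<in> K" "y \<in> K"
  then show "vv (x * y) = vv x * vv y" by (rule vv_mult)
  have "vv (x + y) \<le> max (vv x) (vv y)" using vv_ultra \<open>x \<in> K\<close> \<open>y \<in> K\<close> by blast
  then show "vv (x + y) \<le> vv x + vv y" using vv_nonneg[of x] vv_nonneg[of y] by linarith
next
  have "gm \<in> K" "gm \<noteq> 0" using K_inverse[OF K_gen] b0 by auto
  then show "\<exists>x\<in>K. x \<noteq> 0 \<and> vv x \<noteq> 1" using vv_gm by (intro bexI[of _ gm]) auto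
qed

lemma vv_unstable: "unstable_at b vv"
proof -
  have gK: "gm \<in> K" using K_inverse[OF K_gen] .
  have v1: "vv 1 = 1"
  proof -
    have "vv 1 = vv 1 * vv 1" using vv_mult[OF K_one K_one] by simp
    moreover have "vv 1 \<noteq> 0" using vv_zero by simp
    ultimately show ?thesis by (metis mult_cancel_left1)
  qed
  have pw: "vv (gm ^ n) = vv gm ^ n" for n
  proof (induction n)
    case 0 then show ?case using v1 by simp
  next
    case (Suc n)
    then show ?case using vv_mult[OF gK K_power[OF gK, of n]] by simp
  qed
  have "norm (vv gm) < 1" using vv_gm vv_nonneg[of gm] by simp
  then have "(\<lambda>n. vv gm ^ n) \<longlonglongrightarrow> 0" by (rule LIMSEQ_power_zero)
  moreover have "(\<lambda>n. vv (inverse b ^ n)) = (\<lambda>n. vv gm ^ n)" using pw by simp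
  ultimately show ?thesis unfolding unstable_at_def by simp
qed

lemma vv_nonarch: "\<not> archimedean_on K vv"
  unfolding archimedean_on_def by (simp add: vv_ultra)

end


lemma base_ring:
  fixes f :: "int poly" and \<beta> :: complex and p :: int
  assumes root: "poly (map_poly of_int f) \<beta> = 0" and a0: "coeff f 0 \<noteq> 0"
    and irr: "irreducible f" and pprime: "prime p" and pdvd: "p dvd lead_coeff f"
  defines "R0 \<equiv> {poly (map_poly of_int Q) (inverse \<beta>) | Q. True}"
  shows "ring_in \<beta> (inverse \<beta>) R0" "good (of_int p) (inverse \<beta>) R0"
proof -
  have b0: "\<beta> \<noteq> 0"
  proof
    assume "\<beta> = 0"
    with root have "poly (map_poly (of_int::int\<Rightarrow>complex) f) 0 = 0" by simp
    then show False using a0 by (simp add: poly_0_coeff_0 coeff_map_poly)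
  qed
  have gK: "inverse \<beta> \<in> rat_field_gen \<beta>" using K_inverse[OF K_gen] .
  show "ring_in \<beta> (inverse \<beta>) R0"
    unfolding ring_in_def
  proof (intro conjI ballI)
    show "R0 \<subseteq> rat_field_gen \<beta>"
      unfolding R0_def ipoly_altdef using gK by (auto intro!: K_sum K_mult K_int K_power)
    show "1 \<in> R0" unfolding R0_def by (intro CollectI exI[of _ 1]) simp
    show "inverse \<beta> \<in> R0" unfolding R0_def by (intro CollectI exI[of _ "[:0,1:]"]) (simp add: map_poly_pCons)
  next
    fix x y assume "x \<in> R0" "y \<in> R0"
    then obtain Q1 Q2 where Q: "x = poly (map_poly of_int Q1) (inverse \<beta>)" "y = poly (map_poly of_int Q2) (inverse \<beta>)"
      unfolding R0_def by blast
    have "x + y = poly (map_poly of_int (Q1 + Q2)) (inverse \<beta>)" using Q by (simp add: mpi_add)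
    then show "x + y \<in> R0" unfolding R0_def by blast
    have "x * y = poly (map_poly of_int (Q1 * Q2)) (inverse \<beta>)" using Q by (simp add: mpi_mult)
    then show "x * y \<in> R0" unfolding R0_def by blast
  next
    fix x assume "x \<in> R0"
    then obtain Q1 where "x = poly (map_poly of_int Q1) (inverse \<beta>)" unfolding R0_def by blast
    moreover have "map_poly (of_int::int\<Rightarrow>complex) (- Q1) = - map_poly of_int Q1"
      using mpi_diff[of 0 Q1] by simp
    ultimately show "- x \<in> R0" unfolding R0_def by (intro CollectI exI[of _ "- Q1"]) simp
  qed
  show "good (of_int p) (inverse \<beta>) R0"
    unfolding good_def
  proof (intro ballI notI)
    fix x y assume "x \<in> R0" "y \<in> R0" and eq: "x * of_int p + y * inverse \<beta> = 1"
    then obtain Q1 Q2 where Q: "x = poly (map_poly of_int Q1) (inverse \<beta>)" "y = poly (map_poly of_int Q2) (inverse \<beta>)"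
      unfolding R0_def by blast
    define Qp where "Qp = smult p Q1 + [:0, 1:] * Q2 - 1"
    have ev: "poly (map_poly (of_int::int\<Rightarrow>complex) Qp) (inverse \<beta>) = 0"
      unfolding Qp_def using eq Q by (simp add: mpi_add mpi_diff mpi_mult mpi_smult map_poly_pCons algebra_simps)
    have c0: "coeff Qp 0 = p * coeff Q1 0 - 1" unfolding Qp_def by simp
    have c0nz: "coeff Qp 0 \<noteq> 0"
    proof
      assume "coeff Qp 0 = 0"
      then have "p * coeff Q1 0 = 1" using c0 by simp
      then have "p dvd 1" by (metis dvd_triv_left)
      then show False using prime_gt_1_int[OF pprime] by simp
    qed
    have "poly (map_poly (of_int::int\<Rightarrow>complex) (reflect_poly Qp)) \<beta> =
          \<beta> ^ degree (map_poly (of_int::int\<Rightarrow>complex) Qp) * poly (map_poly of_int Qp) (inverse \<beta>)"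
      unfolding mpi_reflect by (rule poly_reflect_poly_nz[OF b0])
    then have "poly (map_poly (of_int::int\<Rightarrow>complex) (reflect_poly Qp)) \<beta> = 0" using ev by simp
    then have "f dvd reflect_poly Qp" using ZK[OF root a0 irr] by blast
    then obtain h where h: "reflect_poly Qp = f * h" by (elim dvdE)
    have "lead_coeff (reflect_poly Qp) = lead_coeff f * lead_coeff h" unfolding h by (rule lead_coeff_mult)
    then have "lead_coeff f dvd coeff Qp 0" using lead_coeff_reflect[OF c0nz] by simp
    then have d1: "p dvd p * coeff Q1 0 - 1" using pdvd c0 dvd_trans by metis
    have "p dvd p * coeff Q1 0 - (p * coeff Q1 0 - 1)" by (rule dvd_diff[OF dvd_triv_left d1])
    then have "p dvd 1" by simp
    then show False using prime_gt_1_int[OF pprime] by simp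
  qed
qed

theorem mainTheorem13:
  fixes f :: "int poly" and \<beta> :: complex
  assumes prim: "content f = 1"
    and a0: "coeff f 0 \<noteq> 0"
    and ad: "lead_coeff f > 0"
    and hyp: "hyperbolic_poly f"
    and irr: "irreducible f"
    and root: "poly (map_poly of_int f) \<beta> = 0"
  shows "(lead_coeff f = 1 \<or> lead_coeff f = -1) \<longleftrightarrow>
         (\<forall>v. abs_value_on (rat_field_gen \<beta>) v \<and> unstable_at \<beta> v
              \<longrightarrow> archimedean_on (rat_field_gen \<beta>) v)"
proof
  assume lc: "lead_coeff f = 1 \<or> lead_coeff f = -1"
  show "\<forall>v. abs_value_on (rat_field_gen \<beta>) v \<and> unstable_at \<beta> v \<longrightarrow> archimedean_on (rat_field_gen \<beta>) v"
  proof (intro allI impI)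
    fix v assume H: "abs_value_on (rat_field_gen \<beta>) v \<and> unstable_at \<beta> v"
    show "archimedean_on (rat_field_gen \<beta>) v"
    proof (rule ccontr)
      assume "\<not> archimedean_on (rat_field_gen \<beta>) v"
      then have u: "\<forall>x\<in>rat_field_gen \<beta>. \<forall>y\<in>rat_field_gen \<beta>. v (x + y) \<le> max (v x) (v y)"
        unfolding archimedean_on_def by blast
      show False using forward_dir[OF root a0 lc _ _ u] H by blast
    qed
  qed
next
  assume H: "\<forall>v. abs_value_on (rat_field_gen \<beta>) v \<and> unstable_at \<beta> v \<longrightarrow> archimedean_on (rat_field_gen \<beta>) v"
  show "lead_coeff f = 1 \<or> lead_coeff f = -1"
  proof (rule ccontr)
    assume nlc: "\<not> (lead_coeff f = 1 \<or> lead_coeff f = -1)"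
    have "lead_coeff f \<noteq> 0" using ad by (cases "f = 0") auto
    moreover have "\<not> is_unit (lead_coeff f)"
    proof
      assume "is_unit (lead_coeff f)"
      then have "lead_coeff f \<le> 1" using zdvd_imp_le by auto
      then show False using nlc ad by simp
    qed
    ultimately obtain p where p: "p dvd lead_coeff f" "prime p" using prime_divisor_exists by blast
    define R0 where "R0 = {poly (map_poly (of_int::int\<Rightarrow>complex) Q) (inverse \<beta>) | Q. True}"
    have R0: "ring_in \<beta> (inverse \<beta>) R0" "good (of_int p) (inverse \<beta>) R0"
      using base_ring[OF root a0 irr p(2) p(1)] R0_def by auto
    obtain V where V: "ring_in \<beta> (inverse \<beta>) V" "good (of_int p) (inverse \<beta>) V"
      "\<forall>R. ring_in \<beta> (inverse \<beta>) R \<and> good (of_int p) (inverse \<beta>) R \<and> V \<subseteq> R \<longrightarrow> R = V"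
      using exists_maxring[OF R0] by blast
    interpret S: setting \<beta> p V f
    proof unfold_locales
      show "ring_in \<beta> (inverse \<beta>) V" using V(1) .
      show "good (of_int p) (inverse \<beta>) V" using V(2) .
      show "\<And>R. ring_in \<beta> (inverse \<beta>) R \<Longrightarrow> good (of_int p) (inverse \<beta>) R \<Longrightarrow> V \<subseteq> R \<Longrightarrow> R = V"
        using V(3) by blast
      show "of_int p \<in> V" using r_int[OF V(1)] .
    qed (use root a0 irr p prim in auto)
    have "archimedean_on (rat_field_gen \<beta>) S.vv" using H S.vv_abs S.vv_unstable by blast
    then show False using S.vv_nonarch by blast
  qed
qed


end
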